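(* Let $n\ge 1$, $\bar\gamma=(\gamma_1,\dots,\gamma_n)\in\mathbb{N}^n$, and let $s_1,\dots,s_n$ be i.i.d. with $\Pr[s_i=k]=2^{-(k+1)}$ for $k\ge 0$; let $A(\bar\gamma)$ be the event that the closed intervals $[s_i,s_i+\gamma_i]$ are pairwise disjoint. Then $$\Pr[A(\bar\gamma)]=c(n)\cdot 2^{-\binom{n+1}{2}}\sum_{\sigma\in\mathrm{Sym}_n}\prod_{i=1}^{n-1}2^{-(n-i)\gamma_{\sigma(i)}},$$ where $c(n)=2\big/\prod_{i=1}^{n-1}(1-2^{-(n+1-i)})$ satisfies $c(n)\in[2,4]$ for all $n$, and $c(2)=8/3$.
   Context: $\mathbb{N}=\{0,1,2,\dots\}$; $\mathrm{Sym}_n$ is the set of all permutations of $\{1,\dots,n\}$. *)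

theory Defs
  imports "HOL-Probability.Probability" "HOL-Combinatorics.Permutations"
begin

definition start_pmf :: "nat \<Rightarrow> (nat \<Rightarrow> nat) pmf" where
  "start_pmf n = Pi_pmf {1..n} 0 (\<lambda>_. geometric_pmf (1/2))"

definition event_A :: "nat \<Rightarrow> (nat \<Rightarrow> nat) \<Rightarrow> (nat \<Rightarrow> nat) set" where
  "event_A n \<gamma> = {s. \<forall>i\<in>{1..n}. \<forall>j\<in>{1..n}. i \<noteq> j \<longrightarrow>
      {real (s i)..real (s i + \<gamma> i)} \<inter> {real (s j)..real (s j + \<gamma> j)} = {}}"

definition c_const :: "nat \<Rightarrow> real" where
  "c_const n = 2 / (\<Prod>i=1..n-1. (1 - (1/2) ^ (n + 1 - i)))"

end

theory Submission
  imports Defs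
begin

fun chain :: "(nat\<Rightarrow>nat) \<Rightarrow> nat \<Rightarrow> nat list \<Rightarrow> (nat\<Rightarrow>nat) \<Rightarrow> bool" where
  "chain \<gamma> t [] s = True"
| "chain \<gamma> t (x#xs) s = (t \<le> s x \<and> chain \<gamma> (s x + \<gamma> x + 1) xs s)"

fun CC :: "(nat\<Rightarrow>nat) \<Rightarrow> nat list \<Rightarrow> real" where
  "CC \<gamma> [] = 1"
| "CC \<gamma> (x#xs) = (1/2) * (1/2)^(length xs * (\<gamma> x + 1)) / (1 - (1/2)^(Suc (length xs))) * CC \<gamma> xs"

lemma CC_nonneg: "CC \<gamma> xs \<ge> 0"
proof (induction xs)
  case (Cons x xs)
  have "(1/2::real)^(length xs) \<le> 1" by (simp add: power_le_one)
  then show ?case using Cons by simp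
qed simp

lemma chain_upd: "x \<notin> set xs \<Longrightarrow> chain \<gamma> t xs (f(x:=y)) = chain \<gamma> t xs f"
  by (induction xs arbitrary: t) auto

lemma geo_sum:
  fixes K :: real and k t :: nat
  shows "(\<lambda>y. if t \<le> y then (1/2)^(y+1) * ((1/2)^((y + g + 1) * k) * K) else 0) sums
         ((1/2)^(t * Suc k) * ((1/2) * (1/2)^(k * (g + 1)) / (1 - (1/2)^(Suc k)) * K))"
proof -
  define f :: "nat \<Rightarrow> real" where "f = (\<lambda>y. if t \<le> y then (1/2)^(y+1) * ((1/2)^((y + g + 1) * k) * K) else 0)"
  define q :: real where "q = (1/2)^(Suc k)"
  have "(1/2::real)^k \<le> 1" by (simp add: power_le_one)
  then have q: "\<bar>q\<bar> < 1" unfolding q_def by simp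
  have eq: "(if t \<le> y + t then (1/2)^(y+t+1) * ((1/2)^((y + t + g + 1) * k) * K) else 0)
      = ((1/2)^(t * Suc k) * ((1/2) * (1/2)^(k * (g + 1)) * K)) * q ^ y" for y
  proof -
    have e: "(y+t+1) + (y+t+g+1)*k = t*Suc k + (1 + k*(g+1)) + Suc k * y" by (simp add: algebra_simps)
    have "(1/2::real)^(y+t+1) * (1/2)^((y+t+g+1)*k) = (1/2)^((y+t+1) + (y+t+g+1)*k)" by (simp add: power_add)
    also have "\<dots> = (1/2)^(t*Suc k + (1 + k*(g+1)) + Suc k * y)" by (simp only: e)
    also have "\<dots> = (1/2)^(t*Suc k) * ((1/2) * (1/2)^(k*(g+1))) * q^y"
      unfolding q_def power_add power_mult by simp
    finally show ?thesis by (simp add: mult.assoc mult.left_commute)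
  qed
  have "(\<lambda>y. ((1/2)^(t * Suc k) * ((1/2) * (1/2)^(k * (g + 1)) * K)) * q ^ y) sums
        (((1/2)^(t * Suc k) * ((1/2) * (1/2)^(k * (g + 1)) * K)) * (1 / (1 - q)))"
    using q by (intro sums_mult geometric_sums) simp
  then have "(\<lambda>y. (if t \<le> y + t then (1/2)^(y+t+1) * ((1/2)^((y + t + g + 1) * k) * K) else 0)) sums
        (((1/2)^(t * Suc k) * ((1/2) * (1/2)^(k * (g + 1)) * K)) * (1 / (1 - q)))"
    by (simp only: eq)
  then have "(\<lambda>y. f (y + t)) sums
        (((1/2)^(t * Suc k) * ((1/2) * (1/2)^(k * (g + 1)) * K)) * (1 / (1 - q)))"
    by (simp add: f_def)
  then have "f sums (((1/2)^(t * Suc k) * ((1/2) * (1/2)^(k * (g + 1)) * K)) * (1 / (1 - q)) + (\<Sum>i<t. f i))"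
    using sums_iff_shift by blast
  moreover have "(\<Sum>i<t. f i) = 0" by (simp add: f_def)
  ultimately show ?thesis unfolding f_def q_def by simp
qed

abbreviation "G \<equiv> geometric_pmf (1/2::real)"

lemma chain_prob_e:
  assumes "finite I" "distinct xs" "set xs \<subseteq> I"
  shows "emeasure (measure_pmf (Pi_pmf I 0 (\<lambda>_. G))) {s. chain \<gamma> t xs s}
         = ennreal ((1/2)^(t*length xs) * CC \<gamma> xs)"
  using assms
proof (induction xs arbitrary: I t)
  case Nil
  then show ?case by (simp add: measure_pmf.emeasure_space_1[simplified])
next
  case (Cons x xs)
  let ?k = "length xs"
  let ?I = "I - {x}"
  have xI: "x \<in> I" "x \<notin> set xs" using Cons.prems by auto
  have IH: "emeasure (measure_pmf (Pi_pmf ?I 0 (\<lambda>_. G))) {s. chain \<gamma> t' xs s}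
         = ennreal ((1/2)^(t'*?k) * CC \<gamma> xs)" for t'
    using Cons.prems by (intro Cons.IH) auto
  have PI: "Pi_pmf I 0 (\<lambda>_. G) = do {y \<leftarrow> G; f \<leftarrow> Pi_pmf ?I 0 (\<lambda>_. G); return_pmf (f(x:=y))}"
    using Pi_pmf_insert'[of ?I x 0 "\<lambda>_. G"] Cons.prems xI by (simp add: insert_absorb)
  have inner: "emeasure (measure_pmf (do {f \<leftarrow> Pi_pmf ?I 0 (\<lambda>_. G); return_pmf (f(x:=y))})) {s. chain \<gamma> t (x#xs) s}
      = ennreal (if t \<le> y then (1/2)^((y + \<gamma> x + 1) * ?k) * CC \<gamma> xs else 0)" for y
  proof -
    have "(do {f \<leftarrow> Pi_pmf ?I 0 (\<lambda>_. G); return_pmf (f(x:=y))}) = map_pmf (\<lambda>f. f(x:=y)) (Pi_pmf ?I 0 (\<lambda>_. G))"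
      by (simp add: map_pmf_def)
    moreover have "(\<lambda>f. f(x:=y)) -` {s. chain \<gamma> t (x#xs) s} = (if t \<le> y then {s. chain \<gamma> (y + \<gamma> x + 1) xs s} else {})"
      using xI by (auto simp: chain_upd)
    ultimately show ?thesis using IH by (simp add: emeasure_map_pmf)
  qed
  have "emeasure (measure_pmf (Pi_pmf I 0 (\<lambda>_. G))) {s. chain \<gamma> t (x#xs) s}
      = (\<integral>\<^sup>+y. ennreal (if t \<le> y then (1/2)^((y + \<gamma> x + 1) * ?k) * CC \<gamma> xs else 0) \<partial>G)"
    unfolding PI by (subst emeasure_bind_pmf[of G]) (simp only: inner)
  also have "\<dots> = (\<Sum>y. ennreal (if t \<le> y then (1/2)^(y+1) * ((1/2)^((y + \<gamma> x + 1) * ?k) * CC \<gamma> xs) else 0))"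
    apply (simp add: nn_integral_measure_pmf nn_integral_count_space_nat)
    apply (rule arg_cong[where f=suminf], rule ext)
    apply (auto simp: ennreal_mult[symmetric] CC_nonneg power_Suc2 mult.commute simp del: ennreal_mult')
    done
  also have "\<dots> = ennreal ((1/2)^(t * Suc ?k) * ((1/2) * (1/2)^(?k * (\<gamma> x + 1)) / (1 - (1/2)^(Suc ?k)) * CC \<gamma> xs))"
  proof (rule sums_unique[symmetric], subst sums_ennreal)
    show "(\<lambda>y. if t \<le> y then (1/2)^(y+1) * ((1/2)^((y + \<gamma> x + 1) * ?k) * CC \<gamma> xs) else 0) sums
        ((1/2)^(t * Suc ?k) * ((1/2) * (1/2)^(?k * (\<gamma> x + 1)) / (1 - (1/2)^(Suc ?k)) * CC \<gamma> xs))"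
      by (rule geo_sum)
  next
    have "(1/2::real)^?k \<le> 1" by (simp add: power_le_one)
    then show "0 \<le> (1/2::real)^(t * Suc ?k) * ((1/2) * (1/2)^(?k * (\<gamma> x + 1)) / (1 - (1/2)^(Suc ?k)) * CC \<gamma> xs)"
      by (simp add: CC_nonneg)
  qed (auto simp: CC_nonneg)
  finally show ?case by (simp add: mult.assoc)
qed

lemma choose2_Suc: "(Suc (Suc k) choose 2) = (Suc k choose 2) + Suc k"
  by (simp add: numeral_2_eq_2)

lemma CC_formula:
  "CC \<gamma> xs * (\<Prod>i<length xs. 1 - (1/2::real)^(Suc i))
   = (1/2)^(Suc (length xs) choose 2) * (\<Prod>j<length xs. (1/2)^((length xs - 1 - j) * \<gamma> (xs!j)))"
proof (induction xs)
  case Nil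
  then show ?case by (simp add: numeral_2_eq_2)
next
  case (Cons x xs)
  let ?k = "length xs"
  have ne: "1 - (1/2::real)^(Suc ?k) \<noteq> 0"
  proof -
    have "(1/2::real)^?k \<le> 1" by (simp add: power_le_one)
    then show ?thesis by simp
  qed
  have "CC \<gamma> (x#xs) * (\<Prod>i<length (x#xs). 1 - (1/2::real)^(Suc i))
      = (1/2) * (1/2)^(?k * (\<gamma> x + 1)) * (CC \<gamma> xs * (\<Prod>i<?k. 1 - (1/2::real)^(Suc i)))"
    using ne by (simp add: prod.lessThan_Suc field_simps)
  also have "\<dots> = (1/2) * (1/2)^(?k * (\<gamma> x + 1)) * ((1/2)^(Suc ?k choose 2) * (\<Prod>j<?k. (1/2)^((?k - 1 - j) * \<gamma> (xs!j))))"
    using Cons.IH by simp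
  also have "\<dots> = (1/2)^(Suc (Suc ?k) choose 2) * ((1/2)^(?k * \<gamma> x) * (\<Prod>j<?k. (1/2)^((?k - 1 - j) * \<gamma> (xs!j))))"
    unfolding choose2_Suc by (simp add: power_add algebra_simps)
  also have "\<dots> = (1/2)^(Suc (length (x#xs)) choose 2) * (\<Prod>j<length (x#xs). (1/2)^((length (x#xs) - 1 - j) * \<gamma> ((x#xs)!j)))"
    by (simp del: prod.lessThan_Suc add: prod.lessThan_Suc_shift)
  finally show ?case .
qed

definition E :: "nat \<Rightarrow> real" where "E n = (\<Prod>i<n. 1 - (1/2::real)^(Suc i))"

lemma c_const_E:
  assumes "n \<ge> 1" shows "c_const n = 1 / E n"
proof -
  obtain m where n: "n = Suc m" using assms by (cases n) auto
  have "(\<Prod>i=1..n-1. (1 - (1/2::real) ^ (n + 1 - i))) = (\<Prod>j<m. 1 - (1/2::real)^(Suc (Suc j)))"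
    unfolding n
    by (rule prod.reindex_bij_witness[where i="\<lambda>j. m - j" and j="\<lambda>i. m - i"]) (auto simp: Suc_diff_le power_Suc)
  moreover have "E n = (1/2) * (\<Prod>j<m. 1 - (1/2::real)^(Suc (Suc j)))"
    unfolding E_def n by (simp del: prod.lessThan_Suc add: prod.lessThan_Suc_shift)
  ultimately have "(\<Prod>i=1..n-1. (1 - (1/2::real) ^ (n + 1 - i))) = 2 * E n" by simp
  then show ?thesis unfolding c_const_def by simp
qed

lemma E_bounds: "n \<ge> 1 \<Longrightarrow> E n \<le> 1/2 \<and> E n \<ge> 1/4 + (1/2)^(Suc n)"
proof (induction n rule: dec_induct)
  case base
  then show ?case by (simp add: E_def)
next
  case (step m)
  let ?h = "(1/2::real)^(Suc m)"
  have h: "?h \<le> 1/4" using step(1)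
  proof -
    have "?h = (1/4) * (1/2)^(m - 1)" using step(1)
      by (cases m) (auto simp: power_Suc)
    moreover have "(1/2::real)^(m-1) \<le> 1" by (simp add: power_le_one)
    ultimately show ?thesis by simp
  qed
  have h0: "?h \<ge> 0" by simp
  have ES: "E (Suc m) = E m * (1 - ?h)" by (simp add: E_def prod.lessThan_Suc)
  have A1: "E m * (1 - ?h) \<ge> (1/4 + ?h) * (1 - ?h)"
    using step(3) h by (intro mult_right_mono) auto
  have A2: "(1/4 + ?h) * (1 - ?h) \<ge> 1/4 + ?h/2" using h h0
    by (simp add: algebra_simps)
  have E0: "E m \<ge> 0" using step(3) h0 by linarith
  have A3: "E m * (1 - ?h) \<le> E m"
    using mult_left_le[of "1-?h" "E m"] h0 E0 by linarith
  have A4: "(1/2::real)^(Suc (Suc m)) = ?h/2" by simp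
  have S1: "E m \<le> 1/2" using step(3) by blast
  show ?case using ES A1 A2 A3 A4 S1 by linarith
qed

lemma c_const_bounds: "m \<ge> 1 \<Longrightarrow> c_const m \<in> {2..4}"
proof -
  assume m: "m \<ge> 1"
  have "(1/2::real)^(Suc m) \<ge> 0" by simp
  then have b: "E m \<le> 1/2" "E m \<ge> 1/4" using E_bounds[OF m] by linarith+
  then have "1 / E m \<ge> 2" "1 / E m \<le> 4" by (simp_all add: field_simps)
  then show ?thesis using c_const_E[OF m] by simp
qed

lemma c_const_2: "c_const 2 = 8/3"
  by (simp add: c_const_def power2_eq_square divide_simps)

lemma interval_disj:
  "({real a..real (a+g)} \<inter> {real b..real (b+h)} = {}) \<longleftrightarrow> (a+g < b \<or> b+h < a)"
proof
  assume d: "{real a..real (a+g)} \<inter> {real b..real (b+h)} = {}"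
  show "a+g < b \<or> b+h < a"
  proof (rule ccontr)
    assume "\<not> (a+g < b \<or> b+h < a)"
    then have "real (max a b) \<in> {real a..real (a+g)} \<inter> {real b..real (b+h)}" by auto
    with d show False by blast
  qed
qed auto

lemma chain_lb: "chain \<gamma> t xs s \<Longrightarrow> y \<in> set xs \<Longrightarrow> t \<le> s y"
proof (induction xs arbitrary: t)
  case (Cons a xs)
  show ?case
  proof (cases "y = a")
    case False
    then have "Suc (s a + \<gamma> a) \<le> s y" using Cons by auto
    then show ?thesis using Cons.prems by simp
  qed (use Cons.prems in simp)
qed simp

lemma chain_nth: "chain \<gamma> t xs s \<Longrightarrow> i < j \<Longrightarrow> j < length xs \<Longrightarrow> s (xs!i) + \<gamma> (xs!i) < s (xs!j)"
proof (induction xs arbitrary: t i j)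
  case Nil then show ?case by simp
next
  case (Cons x xs)
  then obtain j' where j: "j = Suc j'" by (cases j) auto
  show ?case
  proof (cases i)
    case 0
    have "xs ! j' \<in> set xs" using Cons.prems j by simp
    then have "s x + \<gamma> x + 1 \<le> s (xs!j')" using Cons.prems(1) chain_lb by auto
    then show ?thesis using 0 j by simp
  next
    case (Suc i')
    then show ?thesis using Cons j by auto
  qed
qed

lemma sorted_chain:
  "distinct xs \<Longrightarrow> sorted (map s xs) \<Longrightarrow> (\<forall>y\<in>set xs. t \<le> s y) \<Longrightarrow>
   (\<forall>a\<in>set xs. \<forall>b\<in>set xs. a \<noteq> b \<longrightarrow> s a + \<gamma> a < s b \<or> s b + \<gamma> b < s a) \<Longrightarrow> chain \<gamma> t xs s"
proof (induction xs arbitrary: t)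
  case Nil then show ?case by simp
next
  case (Cons x xs)
  have "\<forall>y\<in>set xs. s x + \<gamma> x + 1 \<le> s y"
  proof
    fix y assume y: "y \<in> set xs"
    then have "x \<noteq> y" "s x \<le> s y" using Cons.prems(1,2) by auto
    then show "s x + \<gamma> x + 1 \<le> s y" using Cons.prems(4) y by fastforce
  qed
  then show ?case using Cons by auto
qed

lemma map_perm_props:
  assumes "\<sigma> permutes {1..n}"
  shows "distinct (map \<sigma> [1..<Suc n])" "set (map \<sigma> [1..<Suc n]) = {1..n}"
    "length (map \<sigma> [1..<Suc n]) = n" "\<And>j. j < n \<Longrightarrow> map \<sigma> [1..<Suc n] ! j = \<sigma> (Suc j)"
proof -
  have "inj_on \<sigma> {1..n}" using assms permutes_inj_on by blast
  then show "distinct (map \<sigma> [1..<Suc n])"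
    by (simp only: distinct_map set_upt atLeastLessThanSuc_atLeastAtMost distinct_upt)
  show "set (map \<sigma> [1..<Suc n]) = {1..n}"
    using permutes_image[OF assms] by (simp only: set_map set_upt atLeastLessThanSuc_atLeastAtMost)
qed (simp_all del: upt_Suc)

lemma event_decomp:
  "event_A n \<gamma> = (\<Union>\<sigma>\<in>{\<sigma>. \<sigma> permutes {1..n}}. {s. chain \<gamma> 0 (map \<sigma> [1..<Suc n]) s})"
proof (intro equalityI subsetI)
  fix s assume sA: "s \<in> event_A n \<gamma>"
  define xs where "xs = sort_key s [1..<Suc n]"
  have dx: "distinct xs" unfolding xs_def by simp
  have sx: "set xs = {1..n}" unfolding xs_def by (simp add: atLeastLessThanSuc_atLeastAtMost del: upt_Suc)
  have lx: "length xs = n" unfolding xs_def by simp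
  have sorted: "sorted (map s xs)" unfolding xs_def by simp
  define \<sigma> where "\<sigma> = (\<lambda>k. if k \<in> {1..n} then xs!(k-1) else k)"
  have bij: "bij_betw \<sigma> {1..n} {1..n}"
  proof (rule bij_betw_imageI)
    show "inj_on \<sigma> {1..n}"
    proof (rule inj_onI)
      fix a b assume ab: "a \<in> {1..n}" "b \<in> {1..n}" "\<sigma> a = \<sigma> b"
      then have "xs!(a-1) = xs!(b-1)" by (simp add: \<sigma>_def)
      then have "a - 1 = b - 1" using dx lx ab(1,2) nth_eq_iff_index_eq[of xs "a-1" "b-1"] by auto
      then show "a = b" using ab(1,2) by auto
    qed
    show "\<sigma> ` {1..n} = {1..n}"
    proof
      show "\<sigma> ` {1..n} \<subseteq> {1..n}"
      proof
        fix y assume "y \<in> \<sigma> ` {1..n}"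
        then obtain a where a: "a \<in> {1..n}" "y = xs!(a-1)" by (auto simp: \<sigma>_def)
        then have "y \<in> set xs" using lx by auto
        then show "y \<in> {1..n}" using sx by simp
      qed
      show "{1..n} \<subseteq> \<sigma> ` {1..n}"
      proof
        fix y assume "y \<in> {1..n}"
        then have "y \<in> set xs" using sx by simp
        then obtain j where j: "j < n" "xs!j = y" using lx by (auto simp: in_set_conv_nth)
        then have "\<sigma> (Suc j) = y" by (simp add: \<sigma>_def)
        moreover have "Suc j \<in> {1..n}" using j by auto
        ultimately show "y \<in> \<sigma> ` {1..n}" by blast
      qed
    qed
  qed
  have perm: "\<sigma> permutes {1..n}"
    by (rule bij_imp_permutes[OF bij]) (auto simp: \<sigma>_def)
  have mx: "map \<sigma> [1..<Suc n] = xs"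
    by (rule nth_equalityI) (auto simp: lx \<sigma>_def simp del: upt_Suc)
  have "chain \<gamma> 0 xs s"
  proof (rule sorted_chain[OF dx sorted])
    show "\<forall>a\<in>set xs. \<forall>b\<in>set xs. a \<noteq> b \<longrightarrow> s a + \<gamma> a < s b \<or> s b + \<gamma> b < s a"
      using sA unfolding sx event_A_def interval_disj by blast
  qed simp
  then show "s \<in> (\<Union>\<sigma>\<in>{\<sigma>. \<sigma> permutes {1..n}}. {s. chain \<gamma> 0 (map \<sigma> [1..<Suc n]) s})"
    using perm mx by blast
next
  fix s assume "s \<in> (\<Union>\<sigma>\<in>{\<sigma>. \<sigma> permutes {1..n}}. {s. chain \<gamma> 0 (map \<sigma> [1..<Suc n]) s})"
  then obtain \<sigma> where perm: "\<sigma> permutes {1..n}" and ch: "chain \<gamma> 0 (map \<sigma> [1..<Suc n]) s" by blast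
  note P = map_perm_props[OF perm]
  let ?xs = "map \<sigma> [1..<Suc n]"
  have key: "s i + \<gamma> i < s j \<or> s j + \<gamma> j < s i" if ij: "i \<in> {1..n}" "j \<in> {1..n}" "i \<noteq> j" for i j
  proof -
    obtain a where a: "a < n" "?xs!a = i" using ij P(2,3) by (metis in_set_conv_nth)
    obtain b where b: "b < n" "?xs!b = j" using ij P(2,3) by (metis in_set_conv_nth)
    have "a \<noteq> b" using a b ij by auto
    then have "a < b \<or> b < a" by auto
    then show ?thesis
      using chain_nth[OF ch, of a b] chain_nth[OF ch, of b a] a b P(3) by auto
  qed
  show "s \<in> event_A n \<gamma>" unfolding event_A_def interval_disj
    using key by blast
qed

lemma chain_strict: "chain \<gamma> t xs s \<Longrightarrow> sorted_wrt (<) (map s xs)"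
  unfolding sorted_wrt_iff_nth_less using chain_nth[of \<gamma> t xs s] by fastforce

lemma event_disj:
  "disjoint_family_on (\<lambda>\<sigma>. {s. chain \<gamma> 0 (map \<sigma> [1..<Suc n]) s}) {\<sigma>. \<sigma> permutes {1..n}}"
unfolding disjoint_family_on_def
proof (intro ballI impI, rule ccontr)
  fix \<sigma> \<tau> assume p: "\<sigma> \<in> {\<sigma>. \<sigma> permutes {1..n}}" "\<tau> \<in> {\<sigma>. \<sigma> permutes {1..n}}" "\<sigma> \<noteq> \<tau>"
    and ne: "{s. chain \<gamma> 0 (map \<sigma> [1..<Suc n]) s} \<inter> {s. chain \<gamma> 0 (map \<tau> [1..<Suc n]) s} \<noteq> {}"
  then obtain s where c1: "chain \<gamma> 0 (map \<sigma> [1..<Suc n]) s" and c2: "chain \<gamma> 0 (map \<tau> [1..<Suc n]) s" by blast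
  let ?xs = "map \<sigma> [1..<Suc n]" and ?ys = "map \<tau> [1..<Suc n]"
  have P1: "set ?xs = {1..n}" "length ?xs = n" using map_perm_props p by auto
  have P2: "set ?ys = {1..n}" "length ?ys = n" using map_perm_props p by auto
  have st1: "sorted_wrt (<) (map s ?xs)" using chain_strict[OF c1] .
  have st2: "sorted_wrt (<) (map s ?ys)" using chain_strict[OF c2] .
  have "set (map s ?ys) = set (map s ?xs)" using P1 P2 by (simp only: set_map)
  then have eqm: "map s ?xs = map s ?ys" using strict_sorted_equal[OF st1 st2] by simp
  have "distinct (map s ?xs)" using st1 strict_sorted_iff by blast
  then have "inj_on s (set ?xs)" using distinct_map by blast
  then have "inj_on s (set ?xs \<union> set ?ys)" using P1 P2 by simp
  then have "?xs = ?ys" using eqm inj_on_map_eq_map by blast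
  then have "\<sigma> k = \<tau> k" for k
  proof -
    assume eq: "?xs = ?ys"
    show ?thesis
    proof (cases "k \<in> {1..n}")
      case True
      then have "?xs ! (k - 1) = \<sigma> k" "?ys ! (k - 1) = \<tau> k"
        using map_perm_props(4)[of \<sigma> n "k-1"] map_perm_props(4)[of \<tau> n "k-1"] p by auto
      then show ?thesis using eq by metis
    next
      case False
      then show ?thesis using p permutes_not_in by (metis mem_Collect_eq)
    qed
  qed
  then show False using p(3) by auto
qed

lemma prod_reidx:
  assumes "n \<ge> 1" "\<sigma> permutes {1..n}"
  shows "(\<Prod>j<n. (1/2::real)^((n - 1 - j) * \<gamma> (map \<sigma> [1..<Suc n] ! j)))
       = (\<Prod>i=1..n-1. (1/2) ^ ((n - i) * \<gamma> (\<sigma> i)))"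
proof -
  obtain m where n: "n = Suc m" using assms by (cases n) auto
  have "(\<Prod>j<n. (1/2::real)^((n - 1 - j) * \<gamma> (map \<sigma> [1..<Suc n] ! j)))
      = (\<Prod>j<n. (1/2::real)^((n - Suc j) * \<gamma> (\<sigma> (Suc j))))"
    by (rule prod.cong[OF refl]) (simp add: map_perm_props(4)[OF assms(2)] del: upt_Suc)
  also have "\<dots> = (\<Prod>i=1..n. (1/2::real)^((n - i) * \<gamma> (\<sigma> i)))"
    by (simp only: prod.atLeast1_atMost_eq One_nat_def)
  also have "\<dots> = (\<Prod>i=1..n-1. (1/2::real)^((n - i) * \<gamma> (\<sigma> i)))"
    unfolding n by (simp add: prod.cl_ivl_Suc)
  finally show ?thesis .
qed

theorem corollary1:
  fixes n :: nat and \<gamma> :: "nat \<Rightarrow> nat"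
  assumes "n \<ge> 1"
  shows "measure_pmf.prob (start_pmf n) (event_A n \<gamma>) =
           c_const n * (1/2) ^ ((n + 1) choose 2) *
           (\<Sum>\<sigma>\<in>{\<sigma>. \<sigma> permutes {1..n}}. \<Prod>i=1..n-1. (1/2) ^ ((n - i) * \<gamma> (\<sigma> i)))
       \<and> (\<forall>m\<ge>1. c_const m \<in> {2..4}) \<and> c_const 2 = 8/3"
proof (intro conjI allI impI)
  show "c_const 2 = 8/3" by (rule c_const_2)
  show "c_const m \<in> {2..4}" if "m \<ge> 1" for m using c_const_bounds that by blast
  let ?M = "start_pmf n"
  let ?P = "{\<sigma>. \<sigma> permutes {1..n}}"
  let ?B = "\<lambda>\<sigma>. {s. chain \<gamma> 0 (map \<sigma> [1..<Suc n]) s}"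
  have fin: "finite ?P" by (rule finite_permutations) simp
  have E4: "E n \<ge> 1/4" using E_bounds[OF assms]
  proof -
    have "(1/2::real)^(Suc n) \<ge> 0" by simp
    then show ?thesis using E_bounds[OF assms] by linarith
  qed
  have "measure ?M (event_A n \<gamma>) = (\<Sum>\<sigma>\<in>?P. measure ?M (?B \<sigma>))"
    unfolding event_decomp
    by (rule measure_pmf.finite_measure_finite_Union[OF fin]) (use event_disj in auto)
  also have "\<dots> = (\<Sum>\<sigma>\<in>?P. c_const n * (1/2) ^ ((n + 1) choose 2) * (\<Prod>i=1..n-1. (1/2) ^ ((n - i) * \<gamma> (\<sigma> i))))"
  proof (rule sum.cong[OF refl])
    fix \<sigma> assume "\<sigma> \<in> ?P"
    then have p: "\<sigma> permutes {1..n}" by simp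
    note P = map_perm_props[OF p]
    let ?xs = "map \<sigma> [1..<Suc n]"
    have "emeasure (measure_pmf ?M) (?B \<sigma>) = ennreal (CC \<gamma> ?xs)"
      using chain_prob_e[of "{1..n}" ?xs \<gamma> 0] P unfolding start_pmf_def by simp
    then have m: "measure ?M (?B \<sigma>) = CC \<gamma> ?xs"
      by (simp add: measure_pmf.emeasure_eq_measure CC_nonneg)
    have "CC \<gamma> ?xs * E n = (1/2)^(Suc n choose 2) * (\<Prod>i=1..n-1. (1/2) ^ ((n - i) * \<gamma> (\<sigma> i)))"
      using CC_formula[of \<gamma> ?xs] P(3) prod_reidx[OF assms p, of \<gamma>] unfolding E_def by (simp del: upt_Suc)
    then have "CC \<gamma> ?xs = (1 / E n) * (1/2)^(Suc n choose 2) * (\<Prod>i=1..n-1. (1/2) ^ ((n - i) * \<gamma> (\<sigma> i)))"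
      using E4 by (simp add: field_simps)
    then show "measure ?M (?B \<sigma>) = c_const n * (1/2) ^ ((n + 1) choose 2) * (\<Prod>i=1..n-1. (1/2) ^ ((n - i) * \<gamma> (\<sigma> i)))"
      using m c_const_E[OF assms] by simp
  qed
  also have "\<dots> = c_const n * (1/2) ^ ((n + 1) choose 2) *
           (\<Sum>\<sigma>\<in>?P. \<Prod>i=1..n-1. (1/2) ^ ((n - i) * \<gamma> (\<sigma> i)))"
    by (simp add: sum_distrib_left)
  finally show "measure_pmf.prob (start_pmf n) (event_A n \<gamma>) =
           c_const n * (1/2) ^ ((n + 1) choose 2) *
           (\<Sum>\<sigma>\<in>{\<sigma>. \<sigma> permutes {1..n}}. \<Prod>i=1..n-1. (1/2) ^ ((n - i) * \<gamma> (\<sigma> i)))" .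
qed

end
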